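(* Let $\mathcal D=\{d_1,\dots,d_s\}$ and $\mathcal H=\{h_1,\dots,h_n\}$ be finite sets, each $h_i$ a probability distribution $\mathbb P[\cdot\mid h_i]$ on $\mathcal D$, and let $\bm p=(p_1,\dots,p_n)$ be a prior on $\mathcal H$ with all $p_i>0$. Let $m_1,m_2,\dots$ be positive integers and for each $t\ge1$ let $P^{|t}$ be the $n\times n$ matrix $$P^{|t}_{ij}=\sum_{\mathbf d\in\mathcal D^{m_t}}\frac{\mathbb P[\mathbf d\mid h_i]\,\mathbb P[\mathbf d\mid h_j]\,p_j}{\sum_{k=1}^n\mathbb P[\mathbf d\mid h_k]\,p_k},$$ where $\mathbb P[(x_1,\dots,x_m)\mid h]=\prod_{k=1}^m\mathbb P[x_k\mid h]$. Let $P^{\le t}=P^{|1}P^{|2}\cdots P^{|t}$ and ${\tt d}_1=\min_{j\ne1}d_{RS}(\mathbb P[\cdot\mid h_1],\mathbb P[\cdot\mid h_j])$. Then for every $t\ge1$, $$\sum_{j=2}^nP^{\le t}_{1j}\le\frac12\sqrt{\frac{n(1-p_1)}{p_1}}\sum_{s=1}^te^{-\frac12{\tt d}_1^2m_s}.$$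
   Context: Root-sine distance: for probability vectors $\bm a,\bm b$ on $\mathcal D$, $d_{RS}(\bm a,\bm b)=\sqrt{1-\bigl(\sum_{i=1}^s\sqrt{a_ib_i}\bigr)^2}$. *)

theory Defs
  imports Complex_Main
begin

definition dRS :: "'d set \<Rightarrow> ('d \<Rightarrow> real) \<Rightarrow> ('d \<Rightarrow> real) \<Rightarrow> real" where
  "dRS D a b = sqrt (1 - (\<Sum>x\<in>D. sqrt (a x * b x))^2)"

definition seqs :: "'d set \<Rightarrow> nat \<Rightarrow> 'd list set" where
  "seqs D m = {xs. set xs \<subseteq> D \<and> length xs = m}"

(* P[(x_1,...,x_m) | h_i] = prod_k P[x_k | h_i];  L i x = P[x | h_i] *)
definition seq_lik :: "(nat \<Rightarrow> 'd \<Rightarrow> real) \<Rightarrow> nat \<Rightarrow> 'd list \<Rightarrow> real" where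
  "seq_lik L i xs = prod_list (map (L i) xs)"

definition Pstep :: "'d set \<Rightarrow> (nat \<Rightarrow> 'd \<Rightarrow> real) \<Rightarrow> (nat \<Rightarrow> real) \<Rightarrow> nat \<Rightarrow> nat
                      \<Rightarrow> nat \<Rightarrow> nat \<Rightarrow> real" where
  "Pstep D L p n m i j =
     (\<Sum>ds\<in>seqs D m. seq_lik L i ds * seq_lik L j ds * p j / (\<Sum>k=1..n. seq_lik L k ds * p k))"

definition matmul :: "nat \<Rightarrow> (nat \<Rightarrow> nat \<Rightarrow> real) \<Rightarrow> (nat \<Rightarrow> nat \<Rightarrow> real) \<Rightarrow> nat \<Rightarrow> nat \<Rightarrow> real" where
  "matmul n A B i j = (\<Sum>k=1..n. A i k * B k j)"

fun Pcum :: "'d set \<Rightarrow> (nat \<Rightarrow> 'd \<Rightarrow> real) \<Rightarrow> (nat \<Rightarrow> real) \<Rightarrow> nat \<Rightarrow> (nat \<Rightarrow> nat)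
              \<Rightarrow> nat \<Rightarrow> nat \<Rightarrow> nat \<Rightarrow> real" where
  "Pcum D L p n ms 0 = (\<lambda>i j. if i = j then 1 else 0)"
| "Pcum D L p n ms (Suc t) = matmul n (Pcum D L p n ms t) (Pstep D L p n (ms (Suc t)))"

end

theory Submission
  imports Defs
begin

lemma seqs_Suc: "seqs D (Suc m) = (\<lambda>(x,xs). x#xs) ` (D \<times> seqs D m)"
  unfolding seqs_def by (auto simp: length_Suc_conv image_iff)

lemma finite_seqs: "finite D \<Longrightarrow> finite (seqs D m)"
  unfolding seqs_def by (rule finite_lists_length_eq)

lemma sum_seqs_prod:
  fixes f :: "'a \<Rightarrow> real"
  assumes "finite D"
  shows "(\<Sum>xs\<in>seqs D m. prod_list (map f xs)) = (\<Sum>x\<in>D. f x)^m"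
proof (induction m)
  case 0
  have "seqs D 0 = {[]}" unfolding seqs_def by auto
  then show ?case by simp
next
  case (Suc m)
  have inj: "inj_on (\<lambda>(x,xs). x#xs) (D \<times> seqs D m)" by (auto simp: inj_on_def)
  have "(\<Sum>xs\<in>seqs D (Suc m). prod_list (map f xs)) =
        (\<Sum>(x,xs)\<in>D \<times> seqs D m. f x * prod_list (map f xs))"
    unfolding seqs_Suc by (subst sum.reindex[OF inj]) (simp add: case_prod_beta)
  also have "\<dots> = (\<Sum>x\<in>D. \<Sum>xs\<in>seqs D m. f x * prod_list (map f xs))"
    by (rule sum.cartesian_product[symmetric])
  also have "\<dots> = (\<Sum>x\<in>D. f x) * (\<Sum>xs\<in>seqs D m. prod_list (map f xs))"
    by (simp add: sum_product)
  finally show ?case using Suc by simp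
qed

lemma sqrt_prod_list:
  "sqrt (prod_list (map f xs) * prod_list (map g xs)) = prod_list (map (\<lambda>x. sqrt (f x * g x)) xs)"
  by (induction xs) (simp_all add: real_sqrt_mult algebra_simps)

lemma cs_sum:
  fixes a :: "'a \<Rightarrow> real"
  assumes "finite A"
  shows "(\<Sum>j\<in>A. a j)^2 \<le> real (card A) * (\<Sum>j\<in>A. (a j)^2)"
proof (cases "A = {}")
  case True then show ?thesis by auto
next
  case False
  define c where "c = real (card A)"
  define S where "S = (\<Sum>j\<in>A. a j)"
  define Q where "Q = (\<Sum>j\<in>A. (a j)^2)"
  have c: "c > 0" using False assms by (simp add: c_def card_gt_0_iff)
  have "0 \<le> (\<Sum>j\<in>A. (c * a j - S)^2)" by (simp add: sum_nonneg)
  also have "\<dots> = c^2 * Q - 2 * c * S * S + c * S^2"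
    by (simp add: power2_eq_square algebra_simps sum.distrib sum_subtractf sum_distrib_left sum_distrib_right
        c_def S_def Q_def)
  finally have "c * S^2 \<le> c * (c * Q)" by (simp add: power2_eq_square algebra_simps)
  then show ?thesis using c by (simp add: c_def S_def Q_def)
qed

lemma seq_lik_nonneg:
  assumes "\<And>x. x \<in> D \<Longrightarrow> L i x \<ge> 0" "ds \<in> seqs D m"
  shows "seq_lik L i ds \<ge> 0"
  unfolding seq_lik_def using assms by (intro prod_list_nonneg) (auto simp: seqs_def)

lemma term_bound:
  fixes a b p1 pj Z :: real
  assumes "a \<ge> 0" "b \<ge> 0" "p1 > 0" "pj > 0" "Z \<ge> a * p1 + b * pj"
  shows "a * b * pj / Z \<le> sqrt (a * b) * sqrt pj / (2 * sqrt p1)"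
proof (cases "a * b = 0")
  case True then show ?thesis by auto
next
  case False
  then have a: "a > 0" and b: "b > 0" using assms by auto
  define u where "u = sqrt (a * p1)"
  define v where "v = sqrt (b * pj)"
  have u: "u > 0" and v: "v > 0" using a b assms by (auto simp: u_def v_def)
  have uu: "u^2 = a * p1" and vv: "v^2 = b * pj" using a b assms by (auto simp: u_def v_def)
  have "2 * u * v \<le> u^2 + v^2" by (simp add: sum_squares_bound)
  also have "\<dots> \<le> Z" using assms uu vv by simp
  finally have Z: "2 * u * v \<le> Z" .
  have Zp: "Z > 0" using Z u v by (smt (verit) mult_pos_pos)
  have key: "a * b * pj = sqrt (a * b) * sqrt pj / sqrt p1 * (u * v)"
    using a b assms unfolding u_def v_def
    by (simp add: real_sqrt_mult field_simps)
  have R: "0 \<le> sqrt (a * b) * sqrt pj / sqrt p1" using a b assms by simp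
  have "a * b * pj / Z \<le> a * b * pj / (2 * u * v)"
    using Z u v a b assms Zp by (intro divide_left_mono) auto
  also have "\<dots> = sqrt (a * b) * sqrt pj / (2 * sqrt p1)"
    unfolding key using u v by (simp add: field_simps)
  finally show ?thesis .
qed

context
  fixes D :: "'d set" and L :: "nat \<Rightarrow> 'd \<Rightarrow> real" and p :: "nat \<Rightarrow> real" and n :: nat
  assumes fin: "finite D"
    and Lnn: "\<And>i x. i \<in> {1..n} \<Longrightarrow> x \<in> D \<Longrightarrow> L i x \<ge> 0"
    and Lsum: "\<And>i. i \<in> {1..n} \<Longrightarrow> (\<Sum>x\<in>D. L i x) = 1"
    and ppos: "\<And>i. i \<in> {1..n} \<Longrightarrow> p i > 0"
begin

lemma p_nonneg: "i \<in> {1..n} \<Longrightarrow> p i \<ge> 0"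
  using ppos by (simp add: less_imp_le)

lemma Z_nonneg: "ds \<in> seqs D m \<Longrightarrow> (\<Sum>k=1..n. seq_lik L k ds * p k) \<ge> 0"
  by (intro sum_nonneg mult_nonneg_nonneg seq_lik_nonneg) (auto intro: Lnn p_nonneg)

lemma Pstep_nonneg:
  assumes "i \<in> {1..n}" "j \<in> {1..n}"
  shows "Pstep D L p n m i j \<ge> 0"
  unfolding Pstep_def
  using assms Z_nonneg
  by (intro sum_nonneg divide_nonneg_nonneg mult_nonneg_nonneg seq_lik_nonneg)
     (auto intro: Lnn p_nonneg)

lemma Pstep_row:
  assumes i: "i \<in> {1..n}"
  shows "(\<Sum>j=1..n. Pstep D L p n m i j) \<le> 1"
proof -
  have "(\<Sum>j=1..n. Pstep D L p n m i j) =
        (\<Sum>ds\<in>seqs D m. \<Sum>j=1..n. seq_lik L i ds * seq_lik L j ds * p j / (\<Sum>k=1..n. seq_lik L k ds * p k))"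
    unfolding Pstep_def by (rule sum.swap)
  also have "\<dots> = (\<Sum>ds\<in>seqs D m. seq_lik L i ds * (\<Sum>k=1..n. seq_lik L k ds * p k) / (\<Sum>k=1..n. seq_lik L k ds * p k))"
    by (intro sum.cong refl) (simp add: sum_divide_distrib[symmetric] sum_distrib_left mult.assoc)
  also have "\<dots> \<le> (\<Sum>ds\<in>seqs D m. seq_lik L i ds)"
  proof (intro sum_mono)
    fix ds assume ds: "ds \<in> seqs D m"
    have "seq_lik L i ds \<ge> 0" using ds i by (intro seq_lik_nonneg) (auto intro: Lnn)
    then show "seq_lik L i ds * (\<Sum>k=1..n. seq_lik L k ds * p k) / (\<Sum>k=1..n. seq_lik L k ds * p k) \<le> seq_lik L i ds"
      by (cases "(\<Sum>k=1..n. seq_lik L k ds * p k) = 0") auto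
  qed
  also have "\<dots> = (\<Sum>x\<in>D. L i x)^m"
    unfolding seq_lik_def by (rule sum_seqs_prod[OF fin])
  also have "\<dots> = 1" using Lsum[OF i] by simp
  finally show ?thesis .
qed

lemma Pcum_props:
  "(\<forall>i\<in>{1..n}. \<forall>j\<in>{1..n}. Pcum D L p n ms t i j \<ge> 0) \<and>
   (\<forall>i\<in>{1..n}. (\<Sum>j=1..n. Pcum D L p n ms t i j) \<le> 1)"
proof (induction t)
  case 0
  have "(\<Sum>j=1..n. (if i = j then 1 else 0 :: real)) \<le> 1" for i
    by (simp add: sum.delta)
  then show ?case by auto
next
  case (Suc t)
  let ?A = "Pcum D L p n ms t" and ?Q = "Pstep D L p n (ms (Suc t))"
  have nn: "\<forall>i\<in>{1..n}. \<forall>j\<in>{1..n}. Pcum D L p n ms (Suc t) i j \<ge> 0"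
    using Suc Pstep_nonneg by (auto simp: matmul_def intro!: sum_nonneg mult_nonneg_nonneg)
  have "(\<Sum>j=1..n. Pcum D L p n ms (Suc t) i j) \<le> 1" if i: "i \<in> {1..n}" for i
  proof -
    have "(\<Sum>j=1..n. Pcum D L p n ms (Suc t) i j) = (\<Sum>k=1..n. ?A i k * (\<Sum>j=1..n. ?Q k j))"
      by (simp add: matmul_def sum_distrib_left) (rule sum.swap)
    also have "\<dots> \<le> (\<Sum>k=1..n. ?A i k)"
      using Suc i Pstep_row Pstep_nonneg by (intro sum_mono mult_right_le_one_le sum_nonneg) auto
    also have "\<dots> \<le> 1" using Suc i by auto
    finally show ?thesis .
  qed
  then show ?case using nn by auto
qed

lemma R_le1:
  assumes k: "k \<in> {1..n}"
  shows "(\<Sum>j=2..n. Pstep D L p n m k j) \<le> 1" "(\<Sum>j=2..n. Pstep D L p n m k j) \<ge> 0"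
proof -
  have "(\<Sum>j=2..n. Pstep D L p n m k j) \<le> (\<Sum>j=1..n. Pstep D L p n m k j)"
    using k Pstep_nonneg by (intro sum_mono2) auto
  then show "(\<Sum>j=2..n. Pstep D L p n m k j) \<le> 1" using Pstep_row[OF k, of m] by linarith
  show "(\<Sum>j=2..n. Pstep D L p n m k j) \<ge> 0"
    using k Pstep_nonneg by (intro sum_nonneg) auto
qed

lemma Pcum_rec:
  assumes n1: "n \<ge> 1"
  shows "(\<Sum>j=2..n. Pcum D L p n ms (Suc t) 1 j)
     \<le> (\<Sum>j=2..n. Pcum D L p n ms t 1 j) + (\<Sum>j=2..n. Pstep D L p n (ms (Suc t)) 1 j)"
proof -
  let ?A = "Pcum D L p n ms t" and ?Q = "Pstep D L p n (ms (Suc t))"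
  define R where "R k = (\<Sum>j=2..n. ?Q k j)" for k
  have one: "(1::nat) \<in> {1..n}" using n1 by simp
  have "(\<Sum>j=2..n. Pcum D L p n ms (Suc t) 1 j) = (\<Sum>k=1..n. ?A 1 k * R k)"
    unfolding R_def by (simp add: matmul_def sum_distrib_left) (rule sum.swap)
  also have "\<dots> = ?A 1 1 * R 1 + (\<Sum>k=2..n. ?A 1 k * R k)"
    using n1 by (subst sum.atLeast_Suc_atMost) (simp_all add: numeral_2_eq_2)
  also have "\<dots> \<le> R 1 + (\<Sum>k=2..n. ?A 1 k)"
  proof (intro add_mono sum_mono)
    have "?A 1 1 \<le> (\<Sum>j=1..n. ?A 1 j)"
      using Pcum_props[of ms t] one by (intro member_le_sum) auto
    also have "\<dots> \<le> 1" using Pcum_props[of ms t] one by auto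
    finally show "?A 1 1 * R 1 \<le> R 1"
      using R_le1[OF one] Pcum_props[of ms t] one unfolding R_def by (intro mult_left_le_one_le) auto
  next
    fix k assume "k \<in> {2..n}"
    then have k: "k \<in> {1..n}" by auto
    show "?A 1 k * R k \<le> ?A 1 k"
      using R_le1[OF k] Pcum_props[of ms t] one k unfolding R_def
      by (intro mult_right_le_one_le) auto
  qed
  finally show ?thesis unfolding R_def by simp
qed

lemma Pcum_sum:
  assumes n1: "n \<ge> 1"
  shows "(\<Sum>j=2..n. Pcum D L p n ms t 1 j) \<le> (\<Sum>s=1..t. \<Sum>j=2..n. Pstep D L p n (ms s) 1 j)"
proof (induction t)
  case 0 then show ?case by simp
next
  case (Suc t)
  then show ?case using Pcum_rec[OF n1, of ms t] by simp
qed

lemma BC_le1: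
  assumes i: "i \<in> {1..n}" and j: "j \<in> {1..n}"
  shows "(\<Sum>x\<in>D. sqrt (L i x * L j x)) \<le> 1" "(\<Sum>x\<in>D. sqrt (L i x * L j x)) \<ge> 0"
proof -
  have "(\<Sum>x\<in>D. sqrt (L i x * L j x)) \<le> (\<Sum>x\<in>D. (L i x + L j x) / 2)"
    using i j Lnn by (intro sum_mono arith_geo_mean_sqrt) auto
  also have "\<dots> = 1" using Lsum[OF i] Lsum[OF j]
    by (simp add: sum_divide_distrib[symmetric] sum.distrib)
  finally show "(\<Sum>x\<in>D. sqrt (L i x * L j x)) \<le> 1" .
  show "(\<Sum>x\<in>D. sqrt (L i x * L j x)) \<ge> 0"
    using i j Lnn by (intro sum_nonneg) auto
qed

lemma step_bound:
  assumes psum: "(\<Sum>i=1..n. p i) = 1" and n1: "n \<ge> 1"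
  shows "(\<Sum>j=2..n. Pstep D L p n m 1 j) \<le> 1/2 * sqrt (real n * (1 - p 1) / p 1) *
           exp (- 1/2 * (Min {dRS D (L 1) (L j) | j. j \<in> {2..n}})^2 * real m)"
proof -
  have one: "(1::nat) \<in> {1..n}" using n1 by simp
  have p1: "p 1 > 0" using ppos[OF one] .
  have rest: "(\<Sum>j=2..n. p j) = 1 - p 1"
    using psum n1 by (subst (asm) sum.atLeast_Suc_atMost) (simp_all add: numeral_2_eq_2)
  have rest_nn: "(\<Sum>j=2..n. p j) \<ge> 0" using p_nonneg by (intro sum_nonneg) auto
  define C where "C = 1/2 * sqrt (real n * (1 - p 1) / p 1)"
  have C0: "C \<ge> 0" unfolding C_def using rest rest_nn p1 by simp
  show ?thesis
  proof (cases "n = 1")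
    case True
    then show ?thesis using C0 unfolding C_def by simp
  next
    case False
    then have n2: "n \<ge> 2" using n1 by simp
    define S where "S = {dRS D (L 1) (L j) | j. j \<in> {2..n}}"
    define d1 where "d1 = Min S"
    define BC where "BC j = (\<Sum>x\<in>D. sqrt (L 1 x * L j x))" for j
    define E where "E = exp (- (d1^2) / 2)"
    have Sfin: "finite S" unfolding S_def by simp
    have Sne: "S \<noteq> {}" unfolding S_def using n2 by auto
    have BC01: "0 \<le> BC j \<and> BC j \<le> 1" if "j \<in> {2..n}" for j
      using BC_le1[OF one, of j] that unfolding BC_def by auto
    have dRS_eq: "dRS D (L 1) (L j) = sqrt (1 - (BC j)^2)" for j
      unfolding dRS_def BC_def ..
    have d1S: "d1 \<in> S" unfolding d1_def using Sfin Sne by (rule Min_in)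
    have d1nn: "d1 \<ge> 0"
    proof -
      obtain j where j: "j \<in> {2..n}" "d1 = dRS D (L 1) (L j)" using d1S unfolding S_def by auto
      show ?thesis using j BC01[OF j(1)] dRS_eq[of j]
        by (simp add: power_le_one)
    qed
    have BCE: "BC j \<le> E" if j: "j \<in> {2..n}" for j
    proof -
      have "d1 \<le> dRS D (L 1) (L j)" unfolding d1_def
        using Sfin j by (intro Min_le) (auto simp: S_def)
      then have "d1^2 \<le> (dRS D (L 1) (L j))^2" using d1nn by (intro power_mono) auto
      also have "\<dots> = 1 - (BC j)^2" unfolding dRS_eq using BC01[OF j]
        by (simp add: power_le_one)
      finally have "(BC j)^2 \<le> 1 - d1^2" by simp
      also have "\<dots> \<le> exp (- (d1^2))" using exp_ge_add_one_self[of "- (d1^2)"] by simp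
      also have "\<dots> = E^2" unfolding E_def by (simp add: exp_double[symmetric])
      finally have "(BC j)^2 \<le> E^2" .
      moreover have "E \<ge> 0" unfolding E_def by simp
      ultimately show ?thesis by (rule power2_le_imp_le)
    qed
    have Em: "E ^ m = exp (- 1/2 * d1^2 * real m)"
    proof -
      have "exp (- 1/2 * d1^2 * real m) = exp (real m * (- (d1^2) / 2))"
        by (rule arg_cong[where f=exp]) (simp add: field_simps)
      then show ?thesis unfolding E_def exp_of_nat_mult by simp
    qed
    have "(\<Sum>j=2..n. Pstep D L p n m 1 j)
        \<le> (\<Sum>j=2..n. \<Sum>ds\<in>seqs D m. sqrt (seq_lik L 1 ds * seq_lik L j ds) * sqrt (p j) / (2 * sqrt (p 1)))"
      unfolding Pstep_def
    proof (intro sum_mono term_bound)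
      fix j ds assume j: "j \<in> {2..n}" and ds: "ds \<in> seqs D m"
      have j1: "j \<in> {1..n}" using j by auto
      show "seq_lik L 1 ds \<ge> 0" using ds one by (intro seq_lik_nonneg) (auto intro: Lnn)
      show "seq_lik L j ds \<ge> 0" using ds j1 by (intro seq_lik_nonneg) (auto intro: Lnn)
      show "p 1 > 0" by (rule p1)
      show "p j > 0" using ppos[OF j1] .
      have "(\<Sum>k\<in>{1,j}. seq_lik L k ds * p k) \<le> (\<Sum>k=1..n. seq_lik L k ds * p k)"
        using one j1 ds by (intro sum_mono2 mult_nonneg_nonneg seq_lik_nonneg p_nonneg) (auto intro: Lnn)
      then show "seq_lik L 1 ds * p 1 + seq_lik L j ds * p j \<le> (\<Sum>k=1..n. seq_lik L k ds * p k)"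
        using j by simp
    qed
    also have "\<dots> = (\<Sum>j=2..n. sqrt (p j) / (2 * sqrt (p 1)) * BC j ^ m)"
    proof (intro sum.cong refl)
      fix j
      have "(\<Sum>ds\<in>seqs D m. sqrt (seq_lik L 1 ds * seq_lik L j ds)) = BC j ^ m"
        unfolding seq_lik_def sqrt_prod_list BC_def by (rule sum_seqs_prod[OF fin])
      moreover have "(\<Sum>ds\<in>seqs D m. sqrt (seq_lik L 1 ds * seq_lik L j ds) * sqrt (p j) / (2 * sqrt (p 1)))
           = (\<Sum>ds\<in>seqs D m. sqrt (seq_lik L 1 ds * seq_lik L j ds)) * (sqrt (p j) / (2 * sqrt (p 1)))"
        by (simp add: sum_distrib_right sum_divide_distrib)
      ultimately show "(\<Sum>ds\<in>seqs D m. sqrt (seq_lik L 1 ds * seq_lik L j ds) * sqrt (p j) / (2 * sqrt (p 1)))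
           = sqrt (p j) / (2 * sqrt (p 1)) * BC j ^ m"
        by simp
    qed
    also have "\<dots> \<le> (\<Sum>j=2..n. sqrt (p j) / (2 * sqrt (p 1)) * E ^ m)"
      using BCE BC01 p1 p_nonneg by (intro sum_mono mult_left_mono power_mono divide_nonneg_nonneg) auto
    also have "\<dots> = (\<Sum>j=2..n. sqrt (p j)) / (2 * sqrt (p 1)) * E ^ m"
      by (simp add: sum_distrib_right sum_divide_distrib)
    also have "\<dots> \<le> C * E ^ m"
    proof (intro mult_right_mono)
      show "E ^ m \<ge> 0" unfolding E_def by simp
      have "(\<Sum>j=2..n. sqrt (p j))^2 \<le> real (card {2..n}) * (\<Sum>j=2..n. (sqrt (p j))^2)"
        by (rule cs_sum) simp
      also have "\<dots> = real (n - 1) * (1 - p 1)"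
      proof -
        have "(\<Sum>j=2..n. (sqrt (p j))^2) = (\<Sum>j=2..n. p j)"
          by (intro sum.cong refl) (auto intro!: p_nonneg)
        then show ?thesis using rest by simp
      qed
      also have "\<dots> \<le> real n * (1 - p 1)" using rest rest_nn by (intro mult_right_mono) auto
      finally have sq: "(\<Sum>j=2..n. sqrt (p j))^2 \<le> real n * (1 - p 1)" .
      have nn: "(\<Sum>j=2..n. sqrt (p j)) \<ge> 0" by (intro sum_nonneg) (auto intro!: p_nonneg)
      have "(\<Sum>j=2..n. sqrt (p j)) \<le> sqrt (real n * (1 - p 1))"
        using sq nn by (intro real_le_rsqrt)
      then show "(\<Sum>j=2..n. sqrt (p j)) / (2 * sqrt (p 1)) \<le> C"
        unfolding C_def using p1 by (simp add: real_sqrt_divide divide_right_mono)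
    qed
    finally show ?thesis unfolding C_def Em S_def d1_def by simp
  qed
qed

end

theorem lemma1:
  fixes D :: "'d set" and L :: "nat \<Rightarrow> 'd \<Rightarrow> real" and p :: "nat \<Rightarrow> real"
    and n :: nat and ms :: "nat \<Rightarrow> nat" and t :: nat
  assumes "finite D"
    and "\<And>i x. i \<in> {1..n} \<Longrightarrow> x \<in> D \<Longrightarrow> L i x \<ge> 0"
    and "\<And>i. i \<in> {1..n} \<Longrightarrow> (\<Sum>x\<in>D. L i x) = 1"
    and "\<And>i. i \<in> {1..n} \<Longrightarrow> p i > 0"
    and "(\<Sum>i=1..n. p i) = 1"
    and "n \<ge> 1"
    and "\<And>s. s \<ge> 1 \<Longrightarrow> ms s > 0"
    and "t \<ge> 1"
  shows "(\<Sum>j=2..n. Pcum D L p n ms t 1 j)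
         \<le> 1/2 * sqrt (real n * (1 - p 1) / p 1) *
           (\<Sum>s=1..t. exp (- 1/2 * (Min {dRS D (L 1) (L j) | j. j \<in> {2..n}})^2 * real (ms s)))"
proof -
  have "(\<Sum>j=2..n. Pcum D L p n ms t 1 j) \<le> (\<Sum>s=1..t. \<Sum>j=2..n. Pstep D L p n (ms s) 1 j)"
    by (rule Pcum_sum[OF assms(1-4) assms(6)])
  also have "\<dots> \<le> (\<Sum>s=1..t. 1/2 * sqrt (real n * (1 - p 1) / p 1) *
           exp (- 1/2 * (Min {dRS D (L 1) (L j) | j. j \<in> {2..n}})^2 * real (ms s)))"
    by (intro sum_mono step_bound[OF assms(1-4) assms(5) assms(6)])
  also have "\<dots> = 1/2 * sqrt (real n * (1 - p 1) / p 1) *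
           (\<Sum>s=1..t. exp (- 1/2 * (Min {dRS D (L 1) (L j) | j. j \<in> {2..n}})^2 * real (ms s)))"
    by (simp add: sum_distrib_left)
  finally show ?thesis .
qed

end
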